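(* Let $A$ be a calibrated $R$-superalgebra with basis $B^A=B^A_{\mathfrak a}\sqcup B^A_{\mathfrak c}\sqcup B^A_{\bar1}$, and let $e\in\mathfrak a$ be an idempotent such that $be=b$ or $be=0$ for every $b\in B^A$. Regard $Ae$ as a calibrated $A$-supermodule with $(Ae)_{\mathfrak a}=\mathfrak ae$ and $(Ae)_{\mathfrak c}=\mathfrak ce$. Then $\tilde\Gamma^d(Ae)\cong(\tilde\Gamma^dA)\,\eta^{e^d}$ as $\tilde\Gamma^dA$-supermodules, where $\eta^{e^d}=e^{\otimes d}$.
   Context: Let $R$ be a principal ideal domain of characteristic $0$. A calibrated $R$-supermodule is a free $R$-supermodule $V=V_{\bar0}\oplus V_{\bar1}$ of finite rank with a decomposition $V_{\bar0}=V_{\mathfrak a}\oplus V_{\mathfrak c}$ into free $R$-submodules, with chosen bases $B_{\mathfrak a},B_{\mathfrak c},B_{\bar1}$ and a total order on their union $B$. $\mathfrak S_d$ acts on $V^{\otimes d}$ by $(v_1\otimes\cdots\otimes v_d)^\sigma=(-1)^{\langle\sigma;\mathbf v\rangle}v_{\sigma1}\otimes\cdots\otimes v_{\sigma d}$, with $\langle\sigma;\mathbf v\rangle$ the number of $k<l$ with $\sigma^{-1}k>\sigma^{-1}l$ and $v_k,v_l$ odd; $\Gamma^dV$ = invariants. For $\mathbf b\in B^d$: $\langle\mathbf b\rangle$ = number of $k<l$ with $b_k,b_l\in B_{\bar1}$ and $b_k>b_l$; $[\mathbf b]^!_{\mathfrak c}=\prod_{b\in B_{\mathfrak c}}\#\{k:b_k=b\}!$;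 $\mathrm{Seq}(B,d)$ = tuples in which only even basis elements may repeat; $x_{\mathbf b}=\sum(-1)^{\langle\mathbf b\rangle+\langle\mathbf b'\rangle}b'_1\otimes\cdots\otimes b'_d$ over distinct place-permutations $\mathbf b'$ of $\mathbf b$; $y_{\mathbf b}=[\mathbf b]^!_{\mathfrak c}x_{\mathbf b}$; $\tilde\Gamma^dV=\mathrm{span}_R\{y_{\mathbf b}\}$. A calibrated $R$-superalgebra is an $R$-superalgebra $A$, free of finite rank, with $A_{\bar0}=\mathfrak a\oplus\mathfrak c$ (free $R$-submodules), $\mathfrak a$ a unital subalgebra; for $\mathbf a\in\mathrm{Seq}(B^A,d)$ write $\eta^{\mathbf a}=y_{\mathbf a}\in\tilde\Gamma^dA$. $\tilde\Gamma^dA$ is a unital subsuperalgebra of the superalgebra $A^{\otimes d}$ (product $(a_1\otimes\cdots)(b_1\otimes\cdots)=(-1)^{\langle\mathbf a,\mathbf b\rangle}a_1b_1\otimes\cdots$, $\langle\mathbf a,\mathbf b\rangle$ = number of $k>l$ with $a_k,b_l$ odd). A calibrated $A$-supermodule is an $A$-supermodule which is calibrated with $\mathfrak aV_{\mathfrak a}\subseteq V_{\mathfrak a}$; for such $V$, $\tilde\Gamma^dV$ is a $\tilde\Gamma^dA$-supermodule via the natural action of $A^{\otimes d}$ on $V^{\otimes d}$ (with the sign $(-1)^{\langle\mathbf a,\mathbf v\rangle}$). *)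

theory Defs
  imports Main "HOL-Library.Multiset"
begin

(* R is modelled by a type 'r :: {idom, ring_char_0}; the PID property is an explicit hypothesis. *)
definition is_ideal_of :: "'r::comm_ring_1 set \<Rightarrow> bool" where
  "is_ideal_of I \<longleftrightarrow> 0 \<in> I \<and> (\<forall>x\<in>I. \<forall>y\<in>I. x + y \<in> I) \<and> (\<forall>r. \<forall>x\<in>I. r * x \<in> I)"

definition is_pid_type :: "'r::idom itself \<Rightarrow> bool" where
  "is_pid_type _ \<longleftrightarrow> (\<forall>I :: 'r set. is_ideal_of I \<longrightarrow> (\<exists>a. I = {a * x | x. True}))"

(* kind of a basis element: in B_a, in B_c, or odd (in B_1) *)
datatype kind = KA | KC | KOdd

abbreviation is_odd_k :: "kind \<Rightarrow> bool" where "is_odd_k k \<equiv> (k = KOdd)"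

(* Free modules with a finite chosen basis B (a finite subset of a type 'v, the total order on B
   is the restriction of the linorder of 'v); elements are coordinate functions 'v \<Rightarrow> 'r
   vanishing outside B. *)
definition elem_of :: "'v set \<Rightarrow> ('v \<Rightarrow> 'r::zero) \<Rightarrow> bool" where
  "elem_of B x \<longleftrightarrow> (\<forall>v. v \<notin> B \<longrightarrow> x v = 0)"

definition bvec :: "'v \<Rightarrow> 'v \<Rightarrow> 'r::{zero,one}" where
  "bvec b = (\<lambda>x. if x = b then 1 else 0)"

(* action of A (basis BA, structure constants act a v w = coefficient of w in a*v) on V (basis BV) *)
definition vact :: "'b set \<Rightarrow> 'v set \<Rightarrow> ('b \<Rightarrow> 'v \<Rightarrow> 'v \<Rightarrow> 'r::comm_ring_1)
                     \<Rightarrow> ('b \<Rightarrow> 'r) \<Rightarrow> ('v \<Rightarrow> 'r) \<Rightarrow> ('v \<Rightarrow> 'r)" where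
  "vact BA BV act x v = (\<lambda>w. if w \<in> BV then (\<Sum>a\<in>BA. \<Sum>u\<in>BV. x a * v u * act a u w) else 0)"

abbreviation amult :: "'b set \<Rightarrow> ('b \<Rightarrow> 'b \<Rightarrow> 'b \<Rightarrow> 'r::comm_ring_1)
                     \<Rightarrow> ('b \<Rightarrow> 'r) \<Rightarrow> ('b \<Rightarrow> 'r) \<Rightarrow> ('b \<Rightarrow> 'r)" where
  "amult BA M \<equiv> vact BA BA M"

(* A calibrated R-superalgebra: free with finite basis BA = B_a \<sqcup> B_c \<sqcup> B_1 (given by kA),
   A_0 = span(B_a \<union> B_c) = \<aa> \<oplus> \<cc>, A_1 = span B_1; associative, unital, supergraded;
   \<aa> = span B_a is a unital subalgebra. *)
definition calibrated_superalgebra ::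
  "'b set \<Rightarrow> ('b \<Rightarrow> kind) \<Rightarrow> ('b \<Rightarrow> 'b \<Rightarrow> 'b \<Rightarrow> 'r::comm_ring_1) \<Rightarrow> bool" where
  "calibrated_superalgebra BA kA M \<longleftrightarrow>
     finite BA \<and>
     (\<forall>a\<in>BA. \<forall>b\<in>BA. \<forall>c\<in>BA.
        amult BA M (amult BA M (bvec a) (bvec b)) (bvec c)
      = amult BA M (bvec a) (amult BA M (bvec b) (bvec c))) \<and>
     (\<exists>u. elem_of BA u \<and> (\<forall>b\<in>BA. u b \<noteq> 0 \<longrightarrow> kA b = KA) \<and>
          (\<forall>x. elem_of BA x \<longrightarrow> amult BA M u x = x \<and> amult BA M x u = x)) \<and>
     (\<forall>a\<in>BA. \<forall>b\<in>BA. \<forall>c\<in>BA. M a b c \<noteq> 0 \<longrightarrow>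
        (is_odd_k (kA c) \<longleftrightarrow> (is_odd_k (kA a) \<noteq> is_odd_k (kA b)))) \<and>
     (\<forall>a\<in>BA. \<forall>b\<in>BA. \<forall>c\<in>BA. kA a = KA \<and> kA b = KA \<and> M a b c \<noteq> 0 \<longrightarrow> kA c = KA)"

(* basis tuples of V^{\<otimes>d}; elements of V^{\<otimes>d} are functions 'v list \<Rightarrow> 'r supported on tlists d BV *)
definition tlists :: "nat \<Rightarrow> 'v set \<Rightarrow> 'v list set" where
  "tlists d B = {l. length l = d \<and> set l \<subseteq> B}"

definition sgn_pair :: "('b \<Rightarrow> kind) \<Rightarrow> ('v \<Rightarrow> kind) \<Rightarrow> 'b list \<Rightarrow> 'v list \<Rightarrow> nat" where
  "sgn_pair kA kV as vs = card {(k, l). l < k \<and> k < length as \<and> l < length vs \<and>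
                                    kA (as ! k) = KOdd \<and> kV (vs ! l) = KOdd}"

(* the action of A^{\<otimes>d} on V^{\<otimes>d}:
   (a_1\<otimes>..\<otimes>a_d)(v_1\<otimes>..\<otimes>v_d) = (-1)^<a,v> a_1v_1 \<otimes> .. \<otimes> a_dv_d, extended bilinearly *)
definition tact :: "nat \<Rightarrow> 'b set \<Rightarrow> 'v set \<Rightarrow> ('b \<Rightarrow> kind) \<Rightarrow> ('v \<Rightarrow> kind)
    \<Rightarrow> ('b \<Rightarrow> 'v \<Rightarrow> 'v \<Rightarrow> 'r::comm_ring_1) \<Rightarrow> ('b list \<Rightarrow> 'r) \<Rightarrow> ('v list \<Rightarrow> 'r) \<Rightarrow> ('v list \<Rightarrow> 'r)" where
  "tact d BA BV kA kV act X U = (\<lambda>ws. if ws \<in> tlists d BV then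
      (\<Sum>as\<in>tlists d BA. \<Sum>vs\<in>tlists d BV.
          X as * U vs * (-1) ^ sgn_pair kA kV as vs * (\<Prod>k<d. act (as ! k) (vs ! k) (ws ! k)))
      else 0)"

abbreviation tmult :: "nat \<Rightarrow> 'b set \<Rightarrow> ('b \<Rightarrow> kind) \<Rightarrow> ('b \<Rightarrow> 'b \<Rightarrow> 'b \<Rightarrow> 'r::comm_ring_1)
    \<Rightarrow> ('b list \<Rightarrow> 'r) \<Rightarrow> ('b list \<Rightarrow> 'r) \<Rightarrow> ('b list \<Rightarrow> 'r)" where
  "tmult d BA kA M \<equiv> tact d BA BA kA kA M"

definition tpow :: "nat \<Rightarrow> ('b \<Rightarrow> 'r::comm_ring_1) \<Rightarrow> ('b list \<Rightarrow> 'r)" where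
  "tpow d x = (\<lambda>as. if length as = d then (\<Prod>k<d. x (as ! k)) else 0)"

definition t_even :: "('v \<Rightarrow> kind) \<Rightarrow> ('v list \<Rightarrow> 'r::zero) \<Rightarrow> bool" where
  "t_even kV X \<longleftrightarrow> (\<forall>l. X l \<noteq> 0 \<longrightarrow> even (length (filter (\<lambda>v. kV v = KOdd) l)))"

definition t_odd :: "('v \<Rightarrow> kind) \<Rightarrow> ('v list \<Rightarrow> 'r::zero) \<Rightarrow> bool" where
  "t_odd kV X \<longleftrightarrow> (\<forall>l. X l \<noteq> 0 \<longrightarrow> odd (length (filter (\<lambda>v. kV v = KOdd) l)))"

definition odd_inv :: "('v::linorder \<Rightarrow> kind) \<Rightarrow> 'v list \<Rightarrow> nat" where
  "odd_inv kV b = card {(k, l). k < l \<and> l < length b \<and> kV (b ! k) = KOdd \<and> kV (b ! l) = KOdd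
                                \<and> b ! k > b ! l}"

definition cfact :: "('v \<Rightarrow> kind) \<Rightarrow> 'v list \<Rightarrow> nat" where
  "cfact kV b = (\<Prod>c\<in>{c \<in> set b. kV c = KC}. fact (count (mset b) c))"

definition seqs :: "'v set \<Rightarrow> ('v \<Rightarrow> kind) \<Rightarrow> nat \<Rightarrow> 'v list set" where
  "seqs B kV d = {b \<in> tlists d B. \<forall>v \<in> set b. kV v = KOdd \<longrightarrow> count (mset b) v = 1}"

(* x_b = sum over distinct place permutations b' of b of (-1)^(<b>+<b'>) b'_1 \<otimes> .. \<otimes> b'_d *)
definition xvec :: "('v::linorder \<Rightarrow> kind) \<Rightarrow> 'v list \<Rightarrow> ('v list \<Rightarrow> 'r::comm_ring_1)" where
  "xvec kV b = (\<lambda>w. if mset w = mset b then (-1) ^ (odd_inv kV b + odd_inv kV w) else 0)"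

definition yvec :: "('v::linorder \<Rightarrow> kind) \<Rightarrow> 'v list \<Rightarrow> ('v list \<Rightarrow> 'r::comm_ring_1)" where
  "yvec kV b = (\<lambda>w. of_nat (cfact kV b) * xvec kV b w)"

definition GammaT :: "nat \<Rightarrow> 'v::linorder set \<Rightarrow> ('v \<Rightarrow> kind) \<Rightarrow> ('v list \<Rightarrow> 'r::comm_ring_1) set" where
  "GammaT d B kV = {X. \<exists>c. X = (\<lambda>w. \<Sum>b\<in>seqs B kV d. c b * yvec kV b w)}"

(* If be = b or be = 0 for all basis elements b, then Ae is free with basis {b \<in> BA. be = b},
   (Ae)_a = \<aa>e spanned by those in B_a, (Ae)_c = \<cc>e spanned by those in B_c,
   (Ae)_1 spanned by the odd ones; A acts by left multiplication. *)
definition basis_Ae :: "'b set \<Rightarrow> ('b \<Rightarrow> 'b \<Rightarrow> 'b \<Rightarrow> 'r::comm_ring_1) \<Rightarrow> ('b \<Rightarrow> 'r) \<Rightarrow> 'b set" where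
  "basis_Ae BA M e = {b \<in> BA. amult BA M (bvec b) e = bvec b}"

end

theory Submission
  imports Defs
begin

lemma finite_tlists: "finite B \<Longrightarrow> finite (tlists d B)"
  unfolding tlists_def using finite_lists_length_eq[of B d] by (simp add: conj_commute)

lemma tlists_Suc: "tlists (Suc d) B = (\<lambda>(u,l). u # l) ` (B \<times> tlists d B)"
  unfolding tlists_def
proof (intro set_eqI iffI)
  fix x assume "x \<in> {l. length l = Suc d \<and> set l \<subseteq> B}"
  then show "x \<in> (\<lambda>(u, l). u # l) ` (B \<times> {l. length l = d \<and> set l \<subseteq> B})"
    by (cases x) (auto simp: image_iff)
qed auto

lemma sum_tlists_prod:
  fixes f :: "nat \<Rightarrow> 'v \<Rightarrow> 'r::comm_semiring_1"
  assumes "finite B"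
  shows "(\<Sum>vs\<in>tlists d B. \<Prod>k<d. f k (vs!k)) = (\<Prod>k<d. \<Sum>u\<in>B. f k u)"
  using assms
proof (induction d arbitrary: f)
  case 0
  have "tlists 0 B = {[]}" unfolding tlists_def by auto
  then show ?case by simp
next
  case (Suc d)
  have inj: "inj_on (\<lambda>(u,l). u # l) (B \<times> tlists d B)" by (auto simp: inj_on_def)
  have "(\<Sum>vs\<in>tlists (Suc d) B. \<Prod>k<Suc d. f k (vs!k))
      = (\<Sum>p\<in>B \<times> tlists d B. f 0 (fst p) * (\<Prod>k<d. f (Suc k) (snd p ! k)))"
    unfolding tlists_Suc by (subst sum.reindex[OF inj]) (auto simp del: prod.lessThan_Suc simp: prod.lessThan_Suc_shift intro!: sum.cong)
  also have "\<dots> = (\<Sum>u\<in>B. \<Sum>l\<in>tlists d B. f 0 u * (\<Prod>k<d. f (Suc k) (l ! k)))"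
    by (simp add: sum.cartesian_product case_prod_beta)
  also have "\<dots> = (\<Sum>u\<in>B. f 0 u * (\<Prod>k<d. \<Sum>u\<in>B. f (Suc k) u))"
    using Suc.IH[of "\<lambda>k. f (Suc k)", OF Suc.prems] by (simp add: sum_distrib_left[symmetric])
  also have "\<dots> = (\<Prod>k<Suc d. \<Sum>u\<in>B. f k u)"
    by (simp del: prod.lessThan_Suc add: prod.lessThan_Suc_shift sum_distrib_right)
  finally show ?case .
qed

lemma amult_bvec:
  assumes "finite BA" "a \<in> BA"
  shows "amult BA M (bvec a) y w = (if w \<in> BA then (\<Sum>u\<in>BA. y u * M a u w) else 0)"
proof -
  have "(\<Sum>x\<in>BA. \<Sum>u\<in>BA. bvec a x * y u * M x u w) = (\<Sum>x\<in>BA. if x = a then (\<Sum>u\<in>BA. y u * M a u w) else 0)"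
    by (rule sum.cong) (auto simp: bvec_def)
  also have "\<dots> = (\<Sum>u\<in>BA. y u * M a u w)" using assms by simp
  finally show ?thesis by (simp add: vact_def)
qed

lemma L1:
  assumes "finite BA"
  shows "amult BA M x y w = (\<Sum>u\<in>BA. y u * amult BA M x (bvec u) w)"
proof (cases "w \<in> BA")
  case True
  have "(\<Sum>u\<in>BA. y u * (\<Sum>a\<in>BA. \<Sum>v\<in>BA. x a * bvec u v * M a v w))
      = (\<Sum>u\<in>BA. y u * (\<Sum>a\<in>BA. x a * M a u w))"
  proof (rule sum.cong[OF refl])
    fix u assume u: "u \<in> BA"
    have "\<And>a. (\<Sum>v\<in>BA. x a * bvec u v * M a v w) = x a * M a u w"
    proof -
      fix a
      have "(\<Sum>v\<in>BA. x a * bvec u v * M a v w) = (\<Sum>v\<in>BA. if v = u then x a * M a u w else 0)"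
        by (rule sum.cong) (auto simp: bvec_def)
      then show "(\<Sum>v\<in>BA. x a * bvec u v * M a v w) = x a * M a u w" using assms u by simp
    qed
    then show "y u * (\<Sum>a\<in>BA. \<Sum>v\<in>BA. x a * bvec u v * M a v w) = y u * (\<Sum>a\<in>BA. x a * M a u w)" by simp
  qed
  also have "\<dots> = (\<Sum>a\<in>BA. \<Sum>u\<in>BA. x a * y u * M a u w)"
    by (subst sum.swap) (simp add: sum_distrib_left mult_ac)
  finally show ?thesis using True by (simp add: vact_def)
qed (simp add: vact_def)

lemma L2:
  assumes "finite BA"
  shows "amult BA M x y w = (\<Sum>a\<in>BA. x a * amult BA M (bvec a) y w)"
proof (cases "w \<in> BA")
  case True
  have "(\<Sum>a\<in>BA. x a * amult BA M (bvec a) y w) = (\<Sum>a\<in>BA. x a * (\<Sum>u\<in>BA. y u * M a u w))"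
    by (rule sum.cong[OF refl]) (simp add: amult_bvec[OF assms] True)
  then show ?thesis using True by (simp add: vact_def sum_distrib_left mult_ac)
qed (simp add: vact_def)


lemma e_act:
  assumes fin: "finite BA"
    and e_basis: "\<forall>b\<in>BA. amult BA M (bvec b) e = bvec b \<or> amult BA M (bvec b) e = (\<lambda>_. 0)"
    and a: "a \<in> BA" and w: "w \<in> BA"
  shows "(\<Sum>u\<in>BA. e u * M a u w) = (if a \<in> basis_Ae BA M e \<and> w = a then 1 else 0)"
proof -
  have "(\<Sum>u\<in>BA. e u * M a u w) = amult BA M (bvec a) e w" using amult_bvec[OF fin a, where y=e and w=w and M=M] w by simp
  also have "\<dots> = (if a \<in> basis_Ae BA M e \<and> w = a then 1 else 0)"
  proof (cases "a \<in> basis_Ae BA M e")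
    case True
    then show ?thesis by (auto simp: basis_Ae_def bvec_def)
  next
    case False
    then have "amult BA M (bvec a) e = (\<lambda>_. 0)" using e_basis a by (auto simp: basis_Ae_def)
    then show ?thesis using False by simp
  qed
  finally show ?thesis .
qed

lemma M_zero:
  assumes A: "calibrated_superalgebra BA kA M"
    and e_basis: "\<forall>b\<in>BA. amult BA M (bvec b) e = bvec b \<or> amult BA M (bvec b) e = (\<lambda>_. 0)"
    and a: "a \<in> BA" and b: "b \<in> basis_Ae BA M e" and c: "c \<in> BA" and cE: "c \<notin> basis_Ae BA M e"
  shows "M a b c = 0"
proof -
  have fin: "finite BA" using A by (simp add: calibrated_superalgebra_def)
  have assoc: "\<And>a b c. a\<in>BA \<Longrightarrow> b\<in>BA \<Longrightarrow> c\<in>BA \<Longrightarrow>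
        amult BA M (amult BA M (bvec a) (bvec b)) (bvec c)
      = amult BA M (bvec a) (amult BA M (bvec b) (bvec c))"
    using A unfolding calibrated_superalgebra_def by blast
  have bBA: "b \<in> BA" using b by (simp add: basis_Ae_def)
  define p where "p = amult BA M (bvec a) (bvec b)"
  have "amult BA M p e c = (\<Sum>u\<in>BA. e u * amult BA M p (bvec u) c)" by (rule L1[OF fin])
  also have "\<dots> = (\<Sum>u\<in>BA. e u * amult BA M (bvec a) (amult BA M (bvec b) (bvec u)) c)"
    unfolding p_def using assoc[OF a bBA] by simp
  also have "\<dots> = (\<Sum>u\<in>BA. e u * (\<Sum>v\<in>BA. amult BA M (bvec b) (bvec u) v * amult BA M (bvec a) (bvec v) c))"
    by (subst L1[OF fin]) simp
  also have "\<dots> = (\<Sum>v\<in>BA. (\<Sum>u\<in>BA. e u * amult BA M (bvec b) (bvec u) v) * amult BA M (bvec a) (bvec v) c)"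
    by (simp add: sum_distrib_left sum_distrib_right mult.assoc) (rule sum.swap)
  also have "\<dots> = (\<Sum>v\<in>BA. amult BA M (bvec b) e v * amult BA M (bvec a) (bvec v) c)"
    by (subst (2) L1[OF fin]) simp
  also have "\<dots> = amult BA M (bvec a) (amult BA M (bvec b) e) c"
    by (subst (2) L1[OF fin]) (simp add: mult_ac)
  also have "\<dots> = amult BA M (bvec a) (bvec b) c" using b by (simp add: basis_Ae_def)
  also have "\<dots> = M a b c"
  proof -
    have "amult BA M (bvec a) (bvec b) c = (\<Sum>u\<in>BA. bvec b u * M a u c)" using amult_bvec[OF fin a, where y="bvec b" and w=c and M=M] c by simp
    also have "\<dots> = (\<Sum>u\<in>BA. if u = b then M a b c else 0)" by (rule sum.cong) (auto simp: bvec_def)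
    finally show ?thesis using bBA fin by simp
  qed
  finally have 1: "amult BA M p e c = M a b c" .
  have "amult BA M p e c = (\<Sum>x\<in>BA. p x * amult BA M (bvec x) e c)" by (rule L2[OF fin])
  also have "\<dots> = 0"
  proof (rule sum.neutral, intro ballI)
    fix x assume x: "x \<in> BA"
    show "p x * amult BA M (bvec x) e c = 0"
    proof (cases "x \<in> basis_Ae BA M e")
      case True
      then have "amult BA M (bvec x) e = bvec x" by (simp add: basis_Ae_def)
      then show ?thesis using True cE by (auto simp: bvec_def)
    next
      case False
      then have "amult BA M (bvec x) e = (\<lambda>_. 0)" using e_basis x by (auto simp: basis_Ae_def)
      then show ?thesis by simp
    qed
  qed
  finally show ?thesis using 1 by simp
qed


lemma basis_Ae_sub: "basis_Ae BA M e \<subseteq> BA" by (auto simp: basis_Ae_def)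

lemma tlists_mono: "B \<subseteq> C \<Longrightarrow> tlists d B \<subseteq> tlists d C" by (auto simp: tlists_def)

lemma nth_in_tlists: "vs \<in> tlists d B \<Longrightarrow> k < d \<Longrightarrow> vs ! k \<in> B"
  by (auto simp: tlists_def)

lemma prod_ind:
  "(\<Prod>k<(d::nat). if P k then (1::'r::comm_semiring_1) else 0) = (if \<forall>k<d. P k then 1 else 0)"
proof (cases "\<forall>k<d. P k")
  case False
  then obtain k where "k < d" "\<not> P k" by auto
  then have "(\<Prod>k<d. if P k then (1::'r) else 0) = 0" by (intro prod_zero) (auto intro!: bexI[of _ k])
  then show ?thesis using False by simp
qed simp

lemma T1:
  assumes A: "calibrated_superalgebra BA kA M"
    and e_in_a: "\<forall>b\<in>BA. e b \<noteq> 0 \<longrightarrow> kA b = KA"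
    and e_basis: "\<forall>b\<in>BA. amult BA M (bvec b) e = bvec b \<or> amult BA M (bvec b) e = (\<lambda>_. 0)"
  shows "tmult d BA kA M X (tpow d e) ws = (if ws \<in> tlists d (basis_Ae BA M e) then X ws else 0)"
proof (cases "ws \<in> tlists d BA")
  case False
  then have "ws \<notin> tlists d (basis_Ae BA M e)" using tlists_mono[OF basis_Ae_sub] by blast
  then show ?thesis using False by (simp add: tact_def)
next
  case ws: True
  let ?E = "basis_Ae BA M e"
  have fin: "finite BA" using A by (simp add: calibrated_superalgebra_def)
  have step1: "X as * tpow d e vs * (-1) ^ sgn_pair kA kA as vs * (\<Prod>k<d. M (as ! k) (vs ! k) (ws ! k))
      = X as * (\<Prod>k<d. e (vs!k) * M (as ! k) (vs ! k) (ws ! k))"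
    if as: "as \<in> tlists d BA" and vs: "vs \<in> tlists d BA" for as vs
  proof (cases "\<exists>k<d. e (vs!k) = 0")
    case True
    then obtain k where k: "k < d" "e (vs!k) = 0" by auto
    have "tpow d e vs = 0" using vs k unfolding tpow_def tlists_def by (auto intro!: prod_zero)
    moreover have "(\<Prod>k<d. e (vs!k) * M (as ! k) (vs ! k) (ws ! k)) = 0" using k by (intro prod_zero) (auto intro!: bexI[of _ k])
    ultimately show ?thesis by simp
  next
    case False
    have "sgn_pair kA kA as vs = 0"
    proof -
      have "{(k, l). l < k \<and> k < length as \<and> l < length vs \<and>
                kA (as ! k) = KOdd \<and> kA (vs ! l) = KOdd} = {}"
        using False vs e_in_a nth_in_tlists[OF vs] by (auto simp: tlists_def)
      then show ?thesis unfolding sgn_pair_def by (simp only: card.empty)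
    qed
    moreover have "tpow d e vs = (\<Prod>k<d. e (vs!k))" using vs by (simp add: tpow_def tlists_def)
    ultimately show ?thesis by (simp add: prod.distrib mult.assoc)
  qed
  have "tmult d BA kA M X (tpow d e) ws
      = (\<Sum>as\<in>tlists d BA. \<Sum>vs\<in>tlists d BA. X as * (\<Prod>k<d. e (vs!k) * M (as ! k) (vs ! k) (ws ! k)))"
    using ws step1 by (simp add: tact_def)
  also have "\<dots> = (\<Sum>as\<in>tlists d BA. X as * (\<Prod>k<d. \<Sum>u\<in>BA. e u * M (as ! k) u (ws ! k)))"
    by (simp add: sum_distrib_left[symmetric] sum_tlists_prod[OF fin, where f="\<lambda>k u. e u * M (_ ! k) u (ws ! k)"])
  also have "\<dots> = (\<Sum>as\<in>tlists d BA. X as * (\<Prod>k<d. if as!k \<in> ?E \<and> ws!k = as!k then 1 else 0))"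
  proof (rule sum.cong[OF refl])
    fix as assume as: "as \<in> tlists d BA"
    have "(\<Prod>k<d. \<Sum>u\<in>BA. e u * M (as ! k) u (ws ! k)) = (\<Prod>k<d. if as!k \<in> ?E \<and> ws!k = as!k then 1 else 0)"
      by (rule prod.cong[OF refl]) (simp add: e_act[OF fin e_basis] nth_in_tlists[OF as] nth_in_tlists[OF ws])
    then show "X as * (\<Prod>k<d. \<Sum>u\<in>BA. e u * M (as ! k) u (ws ! k)) = X as * (\<Prod>k<d. if as!k \<in> ?E \<and> ws!k = as!k then 1 else 0)"
      by simp
  qed
  also have "\<dots> = (\<Sum>as\<in>tlists d BA. if as = ws \<and> ws \<in> tlists d ?E then X as else 0)"
  proof (rule sum.cong[OF refl])
    fix as assume as: "as \<in> tlists d BA"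
    have "(\<forall>k<d. as!k \<in> ?E \<and> ws!k = as!k) \<longleftrightarrow> (as = ws \<and> ws \<in> tlists d ?E)"
      using as ws by (auto simp: tlists_def set_conv_nth intro: nth_equalityI)
    then show "X as * (\<Prod>k<d. if as!k \<in> ?E \<and> ws!k = as!k then 1 else 0) = (if as = ws \<and> ws \<in> tlists d ?E then X as else 0)"
      by (simp add: prod_ind)
  qed
  also have "\<dots> = (if ws \<in> tlists d ?E then X ws else 0)"
    using ws fin by (auto simp: finite_tlists)
  finally show ?thesis .
qed


lemma yvec_supp: "yvec kV b w \<noteq> 0 \<Longrightarrow> mset w = mset b"
  by (auto simp: yvec_def xvec_def split: if_splits)

lemma seqs_mset: "b \<in> seqs B kV d \<Longrightarrow> mset w = mset b \<Longrightarrow> w \<in> seqs B kV d"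
proof -
  assume a: "b \<in> seqs B kV d" "mset w = mset b"
  then have "set w = set b" by (metis set_mset_mset)
  then show ?thesis using a unfolding seqs_def tlists_def by (auto dest: mset_eq_length)
qed

lemma seqs_tlists: "seqs B kV d \<subseteq> tlists d B" by (auto simp: seqs_def)

lemma seqs_mono: "B \<subseteq> C \<Longrightarrow> seqs B kV d \<subseteq> seqs C kV d" by (auto simp: seqs_def tlists_def)

lemma GammaT_supp:
  assumes "x \<in> GammaT d B kV" "x w \<noteq> 0"
  shows "w \<in> tlists d B"
proof -
  obtain c where x: "x = (\<lambda>w. \<Sum>b\<in>seqs B kV d. c b * yvec kV b w)" using assms(1) by (auto simp: GammaT_def)
  then obtain b where b: "b \<in> seqs B kV d" "c b * yvec kV b w \<noteq> 0"
    using assms(2) sum.not_neutral_contains_not_neutral by (metis (no_types, lifting))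
  then have "mset w = mset b" by (metis mult_zero_right yvec_supp)
  then show ?thesis using seqs_mset[OF b(1)] seqs_tlists by blast
qed

lemma restr:
  assumes fin: "finite BA" and sub: "E \<subseteq> BA"
  shows "(\<lambda>w. if w \<in> tlists d E then \<Sum>b\<in>seqs BA kV d. c b * yvec kV b w else 0)
       = (\<lambda>w. \<Sum>b\<in>seqs E kV d. c b * yvec kV b w)"
proof
  fix w
  show "(if w \<in> tlists d E then \<Sum>b\<in>seqs BA kV d. c b * yvec kV b w else 0)
       = (\<Sum>b\<in>seqs E kV d. c b * yvec kV b w)"
  proof (cases "w \<in> tlists d E")
    case True
    have "(\<Sum>b\<in>seqs BA kV d. c b * yvec kV b w) = (\<Sum>b\<in>seqs E kV d. c b * yvec kV b w)"
    proof (rule sum.mono_neutral_right)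
      show "finite (seqs BA kV d)" using finite_subset[OF seqs_tlists finite_tlists[OF fin]] .
      show "seqs E kV d \<subseteq> seqs BA kV d" by (rule seqs_mono[OF sub])
      show "\<forall>i\<in>seqs BA kV d - seqs E kV d. c i * yvec kV i w = 0"
      proof
        fix b assume b: "b \<in> seqs BA kV d - seqs E kV d"
        show "c b * yvec kV b w = 0"
        proof (rule ccontr)
          assume "c b * yvec kV b w \<noteq> 0"
          then have m: "mset w = mset b" by (metis mult_zero_right yvec_supp)
          then have "b \<in> tlists d E" using True unfolding tlists_def
            by (auto dest: mset_eq_length) (metis set_mset_mset subsetD)
          then show False using b unfolding seqs_def by auto
        qed
      qed
    qed
    then show ?thesis using True by simp
  next
    case False
    have "(\<Sum>b\<in>seqs E kV d. c b * yvec kV b w) = 0"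
    proof (rule sum.neutral, rule ballI, rule ccontr)
      fix b assume b: "b \<in> seqs E kV d" and "c b * yvec kV b w \<noteq> 0"
      then have "mset w = mset b" by (metis mult_zero_right yvec_supp)
      then show False using seqs_mset[OF b] seqs_tlists False by blast
    qed
    then show ?thesis using False by simp
  qed
qed

theorem lemma3p17:
  fixes BA :: "'b::linorder set" and kA :: "'b \<Rightarrow> kind"
    and M :: "'b \<Rightarrow> 'b \<Rightarrow> 'b \<Rightarrow> 'r::{idom, ring_char_0}"
    and e :: "'b \<Rightarrow> 'r" and d :: nat
  assumes pid: "is_pid_type TYPE('r)"
    and A: "calibrated_superalgebra BA kA M"
    and e_elem: "elem_of BA e"
    and e_in_a: "\<forall>b\<in>BA. e b \<noteq> 0 \<longrightarrow> kA b = KA"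
    and e_idem: "amult BA M e e = e"
    and e_basis: "\<forall>b\<in>BA. amult BA M (bvec b) e = bvec b \<or> amult BA M (bvec b) e = (\<lambda>_. 0)"
  shows "\<exists>\<phi>. bij_betw \<phi> (GammaT d (basis_Ae BA M e) kA)
                        {tmult d BA kA M X (tpow d e) | X. X \<in> GammaT d BA kA}
          \<and> (\<forall>x\<in>GammaT d (basis_Ae BA M e) kA. \<forall>y\<in>GammaT d (basis_Ae BA M e) kA.
                \<phi> (\<lambda>w. x w + y w) = (\<lambda>w. \<phi> x w + \<phi> y w))
          \<and> (\<forall>r. \<forall>x\<in>GammaT d (basis_Ae BA M e) kA. \<phi> (\<lambda>w. r * x w) = (\<lambda>w. r * \<phi> x w))
          \<and> (\<forall>x\<in>GammaT d (basis_Ae BA M e) kA. t_even kA x \<longrightarrow> t_even kA (\<phi> x))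
          \<and> (\<forall>x\<in>GammaT d (basis_Ae BA M e) kA. t_odd kA x \<longrightarrow> t_odd kA (\<phi> x))
          \<and> (\<forall>X\<in>GammaT d BA kA. \<forall>v\<in>GammaT d (basis_Ae BA M e) kA.
                \<phi> (tact d BA (basis_Ae BA M e) kA kA M X v) = tmult d BA kA M X (\<phi> v))"
proof -
  let ?E = "basis_Ae BA M e"
  have fin: "finite BA" using A by (simp add: calibrated_superalgebra_def)
  have sub: "?E \<subseteq> BA" by (rule basis_Ae_sub)
  have tm: "tmult d BA kA M X (tpow d e) = (\<lambda>ws. if ws \<in> tlists d ?E then X ws else 0)" for X
    using T1[OF A e_in_a e_basis] by blast
  have seteq: "{tmult d BA kA M X (tpow d e) | X. X \<in> GammaT d BA kA} = GammaT d ?E kA"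
  proof (intro set_eqI iffI)
    fix Y assume "Y \<in> {tmult d BA kA M X (tpow d e) | X. X \<in> GammaT d BA kA}"
    then obtain X where X: "X \<in> GammaT d BA kA" and Y: "Y = tmult d BA kA M X (tpow d e)" by auto
    obtain c where c: "X = (\<lambda>w. \<Sum>b\<in>seqs BA kA d. c b * yvec kA b w)" using X by (auto simp: GammaT_def)
    have "Y = (\<lambda>w. \<Sum>b\<in>seqs ?E kA d. c b * yvec kA b w)"
      unfolding Y tm c by (rule restr[OF fin sub])
    then show "Y \<in> GammaT d ?E kA" by (auto simp: GammaT_def)
  next
    fix Y :: "'b list \<Rightarrow> 'r" assume "Y \<in> GammaT d ?E kA"
    then obtain c where c: "Y = (\<lambda>w. \<Sum>b\<in>seqs ?E kA d. c b * yvec kA b w)" by (auto simp: GammaT_def)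
    define X :: "'b list \<Rightarrow> 'r" where "X = (\<lambda>w. \<Sum>b\<in>seqs BA kA d. c b * yvec kA b w)"
    have "X \<in> GammaT d BA kA" unfolding X_def GammaT_def by blast
    moreover have "Y = tmult d BA kA M X (tpow d e)"
      unfolding c tm X_def by (rule restr[OF fin sub, symmetric])
    ultimately show "Y \<in> {tmult d BA kA M X (tpow d e) | X. X \<in> GammaT d BA kA}" by blast
  qed
  have hom: "tact d BA ?E kA kA M X v = tmult d BA kA M X v" if v: "v \<in> GammaT d ?E kA" for X :: "'b list \<Rightarrow> 'r" and v
  proof
    fix ws
    have vz: "v vs = 0" if "vs \<notin> tlists d ?E" for vs using GammaT_supp[OF v] that by blast
    show "tact d BA ?E kA kA M X v ws = tmult d BA kA M X v ws"
    proof (cases "ws \<in> tlists d ?E")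
      case True
      then have wsB: "ws \<in> tlists d BA" using tlists_mono[OF sub] by blast
      have "(\<Sum>as\<in>tlists d BA. \<Sum>vs\<in>tlists d ?E. X as * v vs * (-1) ^ sgn_pair kA kA as vs * (\<Prod>k<d. M (as ! k) (vs ! k) (ws ! k)))
          = (\<Sum>as\<in>tlists d BA. \<Sum>vs\<in>tlists d BA. X as * v vs * (-1) ^ sgn_pair kA kA as vs * (\<Prod>k<d. M (as ! k) (vs ! k) (ws ! k)))"
        by (rule sum.cong[OF refl], rule sum.mono_neutral_left)
           (auto simp: finite_tlists[OF fin] tlists_mono[OF sub] vz)
      then show ?thesis using True wsB by (simp add: tact_def)
    next
      case False
      show ?thesis
      proof (cases "ws \<in> tlists d BA")
        case wsB: True
        then obtain k where k: "k < d" "ws ! k \<notin> ?E" "ws ! k \<in> BA" using False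
          unfolding tlists_def by (auto simp: set_conv_nth)
        have "(\<Sum>as\<in>tlists d BA. \<Sum>vs\<in>tlists d BA. X as * v vs * (-1) ^ sgn_pair kA kA as vs * (\<Prod>k<d. M (as ! k) (vs ! k) (ws ! k))) = 0"
        proof (intro sum.neutral ballI)
          fix as vs assume as: "as \<in> tlists d BA" and vs: "vs \<in> tlists d BA"
          show "X as * v vs * (-1) ^ sgn_pair kA kA as vs * (\<Prod>k<d. M (as ! k) (vs ! k) (ws ! k)) = 0"
          proof (cases "vs \<in> tlists d ?E")
            case True
            have "M (as ! k) (vs ! k) (ws ! k) = 0"
              by (rule M_zero[OF A e_basis nth_in_tlists[OF as k(1)] nth_in_tlists[OF True k(1)] k(3) k(2)])
            then have "(\<Prod>k<d. M (as ! k) (vs ! k) (ws ! k)) = 0"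
              using k(1) by (intro prod_zero) (auto intro!: bexI[of _ k])
            then show ?thesis by simp
          qed (simp add: vz)
        qed
        then show ?thesis using False wsB by (simp add: tact_def)
      next
        case False2: False
        then show ?thesis using False by (simp add: tact_def)
      qed
    qed
  qed
  show ?thesis
    apply (rule exI[of _ "\<lambda>x. x"])
    using seteq hom by (simp add: bij_betw_def)
qed

end
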